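(* Let $\Gamma$ be a weighted digraph with vertex set $V(\Gamma)=\{1,\dots,n\}$, $n>1$, without loops and with strictly positive arc weights, and let $\widehat\Gamma$ be its ground extension. Let $0\le k\le n$ and let $\mathcal I=\{i_1,\dots,i_k\}\subseteq V(\Gamma)$, $\mathcal J=\{j_1,\dots,j_k\}\subseteq V(\Gamma)$. Let $A$ be the set of in-forests of $\Gamma$ in which, for every $u=1,\dots,k$, the vertex $i_u$ belongs to the tree whose root is $j_u$. Let $B$ be the set of in-forests $F$ of $\widehat\Gamma$ consisting of exactly $k+1$ trees such that $0$ is the root of the tree containing $0$ and, for every $u=1,\dots,k$, $i_u$ belongs to the tree of $F$ whose root is $j_u$. Then there is a weight-preserving bijection between $A$ and $B$.
   Context: $W=(w_{ij})$ is the matrix of arc weights ($w_{ij}>0$ iff there is an arc $i\to j$, else $0$). The weight of a subgraph is the product of its arc weights (1 if no arcs). A converging tree is a weakly connected digraph with one vertex (the root) of outdegree 0 and all others of outdegree 1; an in-forest of a digraph is a spanning subgraph whose weak components are converging trees. The ground extension $\widehat\Gamma$ of $\Gamma$ is the weighted digraph with vertex set $V(\Gamma)\cup\{0\}$, arc set $E(\Gamma)\cup\{(j,0):j\in V(\Gamma)\}$, the arcs of $\Gamma$ keeping their weights and each arc $(j,0)$ having weight 1. *)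

theory Defs
  imports Complex_Main
begin

definition out_deg :: "('a \<times> 'a) set \<Rightarrow> 'a \<Rightarrow> nat" where
  "out_deg T v = card {w. (v, w) \<in> T}"

definition wcomp_rel :: "'a set \<Rightarrow> ('a \<times> 'a) set \<Rightarrow> ('a \<times> 'a) set" where
  "wcomp_rel V F = {(x, y). x \<in> V \<and> y \<in> V \<and> (x, y) \<in> (F \<union> F\<inverse>)\<^sup>*}"

definition converging_tree :: "'a set \<Rightarrow> ('a \<times> 'a) set \<Rightarrow> bool" where
  "converging_tree C T \<longleftrightarrow> C \<noteq> {} \<and> T \<subseteq> C \<times> C \<and>
     (\<forall>x\<in>C. \<forall>y\<in>C. (x, y) \<in> (T \<union> T\<inverse>)\<^sup>*) \<and>
     (\<exists>r\<in>C. out_deg T r = 0 \<and> (\<forall>v\<in>C - {r}. out_deg T v = 1))"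

definition in_forest :: "'a set \<Rightarrow> ('a \<times> 'a) set \<Rightarrow> ('a \<times> 'a) set \<Rightarrow> bool" where
  "in_forest V E F \<longleftrightarrow> F \<subseteq> E \<and>
     (\<forall>C \<in> V // wcomp_rel V F. converging_tree C (F \<inter> (C \<times> C)))"

definition in_tree_with_root :: "'a set \<Rightarrow> ('a \<times> 'a) set \<Rightarrow> 'a \<Rightarrow> 'a \<Rightarrow> bool" where
  "in_tree_with_root V F i r \<longleftrightarrow> (i, r) \<in> wcomp_rel V F \<and> out_deg F r = 0"

definition num_trees :: "'a set \<Rightarrow> ('a \<times> 'a) set \<Rightarrow> nat" where
  "num_trees V F = card (V // wcomp_rel V F)"

definition arcs_of :: "nat set \<Rightarrow> (nat \<Rightarrow> nat \<Rightarrow> real) \<Rightarrow> (nat \<times> nat) set" where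
  "arcs_of V W = {(i, j). i \<in> V \<and> j \<in> V \<and> W i j > 0}"

definition sg_weight :: "(nat \<Rightarrow> nat \<Rightarrow> real) \<Rightarrow> (nat \<times> nat) set \<Rightarrow> real" where
  "sg_weight W F = (\<Prod>(i, j)\<in>F. W i j)"

definition ground_vertices :: "nat set \<Rightarrow> nat set" where
  "ground_vertices V = insert 0 V"

definition ground_arcs :: "nat set \<Rightarrow> (nat \<Rightarrow> nat \<Rightarrow> real) \<Rightarrow> (nat \<times> nat) set" where
  "ground_arcs V W = arcs_of V W \<union> {(j, 0) | j. j \<in> V}"

definition ground_weight :: "(nat \<Rightarrow> nat \<Rightarrow> real) \<Rightarrow> nat \<Rightarrow> nat \<Rightarrow> real" where
  "ground_weight W i j = (if j = 0 then 1 else W i j)"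

end

theory Submission
  imports Defs
begin

abbreviation S :: "('a \<times> 'a) set \<Rightarrow> ('a \<times> 'a) set" where
  "S F \<equiv> (F \<union> F\<inverse>)\<^sup>*"

definition good :: "'a set \<Rightarrow> ('a \<times> 'a) set \<Rightarrow> bool" where
  "good V F \<longleftrightarrow> F \<subseteq> V \<times> V \<and> finite F \<and> (\<forall>v. out_deg F v \<le> 1) \<and>
     (\<forall>x\<in>V. \<exists>r\<in>V. (x, r) \<in> S F \<and> out_deg F r = 0)"

lemma S_sym: "(x, y) \<in> S F \<Longrightarrow> (y, x) \<in> S F"
proof -
  have "sym (F \<union> F\<inverse>)" by (auto simp: sym_def)
  then have "sym (S F)" by (rule sym_rtrancl)
  moreover assume "(x, y) \<in> S F"
  ultimately show ?thesis by (auto simp: sym_def)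
qed

lemma S_trans: "(x, y) \<in> S F \<Longrightarrow> (y, z) \<in> S F \<Longrightarrow> (x, z) \<in> S F"
  by (rule rtrancl_trans)

lemma S_mono: "F \<subseteq> G \<Longrightarrow> (x, y) \<in> S F \<Longrightarrow> (x, y) \<in> S G"
  using rtrancl_mono[of "F \<union> F\<inverse>" "G \<union> G\<inverse>"] by blast

lemma S_edge: "(x, y) \<in> F \<Longrightarrow> (x, y) \<in> S F"
  by auto

lemma finite_succ: "finite F \<Longrightarrow> finite {w. (v, w) \<in> F}"
  by (rule finite_subset[of _ "snd ` F"]) force+

lemma out_deg_0_iff: "finite F \<Longrightarrow> out_deg F v = 0 \<longleftrightarrow> (\<forall>w. (v, w) \<notin> F)"
  unfolding out_deg_def using finite_succ[of F v] by auto

lemma out_deg_uniq: "finite F \<Longrightarrow> out_deg F v \<le> 1 \<Longrightarrow> (v, a) \<in> F \<Longrightarrow> (v, b) \<in> F \<Longrightarrow> a = b"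
  unfolding out_deg_def using finite_succ[of F v] card_le_Suc0_iff_eq[of "{w. (v, w) \<in> F}"] by auto

lemma common_desc:
  assumes fin: "finite T" and deg: "\<forall>v. out_deg T v \<le> 1" and xy: "(x, y) \<in> S T"
  shows "\<exists>z. (x, z) \<in> T\<^sup>* \<and> (y, z) \<in> T\<^sup>*"
  using xy
proof (induction rule: rtrancl_induct)
  case base then show ?case by auto
next
  case (step y w)
  then obtain z where z: "(x, z) \<in> T\<^sup>*" "(y, z) \<in> T\<^sup>*" by blast
  show ?case
  proof (cases "(y, w) \<in> T")
    case True
    from z(2) show ?thesis
    proof (cases rule: converse_rtranclE)
      case base
      then show ?thesis using z True by (meson rtrancl.rtrancl_into_rtrancl rtrancl.rtrancl_refl)
    next
      case (step a)
      then have "a = w" using out_deg_uniq[OF fin _ step(1) True] deg by auto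
      then show ?thesis using z step by auto
    qed
  next
    case False
    then have "(w, y) \<in> T" using step by auto
    then show ?thesis using z by (meson converse_rtrancl_into_rtrancl)
  qed
qed

lemma sink_uniq:
  assumes fin: "finite T" and deg: "\<forall>v. out_deg T v \<le> 1" and xy: "(x, y) \<in> S T"
    and sx: "out_deg T x = 0" and sy: "out_deg T y = 0"
  shows "x = y"
proof -
  obtain z where z: "(x, z) \<in> T\<^sup>*" "(y, z) \<in> T\<^sup>*" using common_desc[OF fin deg xy] by blast
  have "x = z" using z(1) sx out_deg_0_iff[OF fin] by (cases rule: converse_rtranclE) auto
  moreover have "y = z" using z(2) sy out_deg_0_iff[OF fin] by (cases rule: converse_rtranclE) auto
  ultimately show ?thesis by simp
qed

lemma S_in_V: "(x, y) \<in> S F \<Longrightarrow> x \<in> V \<Longrightarrow> F \<subseteq> V \<times> V \<Longrightarrow> y \<in> V"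
  by (induction rule: rtrancl_induct) auto

lemma closed_path:
  assumes "(y, z) \<in> S F" "y \<in> C" "\<forall>a b. (a, b) \<in> F \<longrightarrow> (a \<in> C \<longleftrightarrow> b \<in> C)"
  shows "(y, z) \<in> S (F \<inter> (C \<times> C)) \<and> z \<in> C"
  using assms(1)
proof (induction rule: rtrancl_induct)
  case base then show ?case using assms by auto
next
  case (step z w)
  then have "w \<in> C" using assms(3) by blast
  then have "(z, w) \<in> (F \<inter> (C \<times> C)) \<union> (F \<inter> (C \<times> C))\<inverse>" using step by auto
  then show ?case using step \<open>w \<in> C\<close> by (meson rtrancl.rtrancl_into_rtrancl)
qed

lemma wcomp_class:
  assumes "F \<subseteq> V \<times> V" "x \<in> V"
  shows "wcomp_rel V F `` {x} = {y. (x, y) \<in> S F}"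
  using assms S_in_V[of x _ F V] unfolding wcomp_rel_def by auto

lemma wcomp_equiv:
  assumes "F \<subseteq> V \<times> V"
  shows "equiv V (wcomp_rel V F)"
  unfolding equiv_def refl_on_def sym_def trans_def wcomp_rel_def
  by (auto intro: S_sym S_trans)

lemma class_succ:
  assumes "F \<subseteq> V \<times> V" "x \<in> V" "C = {y. (x, y) \<in> S F}" "v \<in> C"
  shows "{w. (v, w) \<in> F \<inter> (C \<times> C)} = {w. (v, w) \<in> F}"
proof -
  have "(v, w) \<in> F \<Longrightarrow> w \<in> C" for w
    using assms by (auto intro: S_trans S_edge)
  then show ?thesis using assms by auto
qed


lemma forest_iff:
  assumes finV: "finite V" and EV: "E \<subseteq> V \<times> V"
  shows "in_forest V E F \<longleftrightarrow> F \<subseteq> E \<and> good V F"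
proof
  assume H: "in_forest V E F"
  then have FE: "F \<subseteq> E" unfolding in_forest_def by auto
  then have FV: "F \<subseteq> V \<times> V" using EV by auto
  then have finF: "finite F" using finV by (meson finite_SigmaI finite_subset)
  have main: "out_deg F v \<le> 1 \<and> (\<exists>r\<in>V. (v, r) \<in> S F \<and> out_deg F r = 0)" if vV: "v \<in> V" for v
  proof -
    define C where "C = {y. (v, y) \<in> S F}"
    have "C \<in> V // wcomp_rel V F" using wcomp_class[OF FV vV] quotientI[of v V "wcomp_rel V F"] vV
      unfolding C_def by simp
    then have ct: "converging_tree C (F \<inter> (C \<times> C))" using H unfolding in_forest_def by auto
    have od: "out_deg (F \<inter> (C \<times> C)) u = out_deg F u" if "u \<in> C" for u
      unfolding out_deg_def using class_succ[OF FV vV C_def that] by simp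
    obtain r where r: "r \<in> C" "out_deg (F \<inter> (C \<times> C)) r = 0" "\<forall>u\<in>C - {r}. out_deg (F \<inter> (C \<times> C)) u = 1"
      using ct unfolding converging_tree_def by blast
    have vC: "v \<in> C" unfolding C_def by simp
    have "out_deg F v \<le> 1" using r od[OF vC] vC by (cases "v = r") auto
    moreover have "r \<in> V" using r(1) S_in_V[OF _ vV FV] unfolding C_def by auto
    moreover have "(v, r) \<in> S F" using r(1) unfolding C_def by auto
    moreover have "out_deg F r = 0" using r od by auto
    ultimately show ?thesis by blast
  qed
  have "out_deg F v \<le> 1" for v
  proof (cases "v \<in> V")
    case True then show ?thesis using main by blast
  next
    case False
    then have "{w. (v, w) \<in> F} = {}" using FV by auto
    then show ?thesis unfolding out_deg_def by simp
  qed
  then show "F \<subseteq> E \<and> good V F" using FE FV finF main unfolding good_def by blast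
next
  assume H: "F \<subseteq> E \<and> good V F"
  then have FV: "F \<subseteq> V \<times> V" and finF: "finite F" and deg: "\<forall>v. out_deg F v \<le> 1"
    and snk: "\<forall>x\<in>V. \<exists>r\<in>V. (x, r) \<in> S F \<and> out_deg F r = 0"
    unfolding good_def by auto
  have "converging_tree C (F \<inter> (C \<times> C))" if Cq: "C \<in> V // wcomp_rel V F" for C
  proof -
    obtain x where xV: "x \<in> V" and Cx: "C = wcomp_rel V F `` {x}" using Cq by (auto elim: quotientE)
    then have C_def: "C = {y. (x, y) \<in> S F}" using wcomp_class[OF FV] by auto
    have od: "out_deg (F \<inter> (C \<times> C)) u = out_deg F u" if "u \<in> C" for u
      unfolding out_deg_def using class_succ[OF FV xV C_def that] by simp
    have closed: "\<forall>a b. (a, b) \<in> F \<longrightarrow> (a \<in> C \<longleftrightarrow> b \<in> C)"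
    proof (intro allI impI)
      fix a b assume ab: "(a, b) \<in> F"
      then have 1: "(a, b) \<in> S F" and 2: "(b, a) \<in> S F" using S_edge S_sym by blast+
      show "a \<in> C \<longleftrightarrow> b \<in> C" unfolding C_def using S_trans[OF _ 1, of x] S_trans[OF _ 2, of x] by auto
    qed
    have conn: "\<forall>y\<in>C. \<forall>z\<in>C. (y, z) \<in> S (F \<inter> (C \<times> C))"
    proof (intro ballI)
      fix y z assume "y \<in> C" "z \<in> C"
      then have "(y, x) \<in> S F" "(x, z) \<in> S F" unfolding C_def using S_sym by auto
      then have "(y, z) \<in> S F" by (rule S_trans)
      then show "(y, z) \<in> S (F \<inter> (C \<times> C))" using closed_path[OF _ \<open>y \<in> C\<close> closed] by blast
    qed
    obtain r where r: "r \<in> V" "(x, r) \<in> S F" "out_deg F r = 0" using snk xV by blast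
    have rC: "r \<in> C" using r unfolding C_def by auto
    have "\<forall>u\<in>C - {r}. out_deg (F \<inter> (C \<times> C)) u = 1"
    proof
      fix u assume u: "u \<in> C - {r}"
      have "out_deg F u \<noteq> 0"
      proof
        assume "out_deg F u = 0"
        moreover have "(u, x) \<in> S F" using u unfolding C_def using S_sym by auto
        then have "(u, r) \<in> S F" using r(2) by (rule S_trans)
        ultimately have "u = r" using sink_uniq[OF finF deg] r(3) by blast
        then show False using u by auto
      qed
      moreover have "out_deg F u \<le> 1" using deg by blast
      ultimately have "out_deg F u = 1" by linarith
      then show "out_deg (F \<inter> (C \<times> C)) u = 1" using od u by simp
    qed
    moreover have "C \<noteq> {}" using rC by auto
    ultimately show ?thesis unfolding converging_tree_def using conn rC od r(3) by auto
  qed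
  then show "in_forest V E F" using H unfolding in_forest_def by auto
qed



lemma card_quot:
  assumes g: "good V F"
  shows "card (V // wcomp_rel V F) = card {r\<in>V. out_deg F r = 0}"
proof -
  from g have FV: "F \<subseteq> V \<times> V" and finF: "finite F" and deg: "\<forall>v. out_deg F v \<le> 1"
    and snk: "\<forall>x\<in>V. \<exists>r\<in>V. (x, r) \<in> S F \<and> out_deg F r = 0"
    unfolding good_def by auto
  let ?R = "wcomp_rel V F"
  let ?Sk = "{r\<in>V. out_deg F r = 0}"
  have inj: "inj_on (\<lambda>r. ?R `` {r}) ?Sk"
  proof (rule inj_onI)
    fix a b assume a: "a \<in> ?Sk" and b: "b \<in> ?Sk" and e: "?R `` {a} = ?R `` {b}"
    have "b \<in> ?R `` {b}" using b unfolding wcomp_rel_def by auto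
    then have "(a, b) \<in> S F" using e wcomp_class[OF FV] a by auto
    then show "a = b" using sink_uniq[OF finF deg] a b by auto
  qed
  have img: "(\<lambda>r. ?R `` {r}) ` ?Sk = V // ?R"
  proof
    show "(\<lambda>r. ?R `` {r}) ` ?Sk \<subseteq> V // ?R" by (auto intro: quotientI)
  next
    show "V // ?R \<subseteq> (\<lambda>r. ?R `` {r}) ` ?Sk"
    proof
      fix C assume "C \<in> V // ?R"
      then obtain x where xV: "x \<in> V" and Cx: "C = ?R `` {x}" by (rule quotientE) blast
      obtain r where r: "r \<in> V" "(x, r) \<in> S F" "out_deg F r = 0" using snk xV by blast
      have "(x, r) \<in> ?R" using r xV unfolding wcomp_rel_def by auto
      then have "?R `` {x} = ?R `` {r}" using equiv_class_eq[OF wcomp_equiv[OF FV]] by blast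
      then show "C \<in> (\<lambda>r. ?R `` {r}) ` ?Sk" using Cx r by auto
    qed
  qed
  show ?thesis using card_image[OF inj] img by simp
qed


lemma out_deg_mono:
  assumes "finite G" "F \<subseteq> G"
  shows "out_deg F v \<le> out_deg G v"
  unfolding out_deg_def using assms finite_succ[of G v] by (intro card_mono) auto

lemma main_gen:
  fixes V K :: "nat set" and W :: "nat \<Rightarrow> nat \<Rightarrow> real" and I J :: "nat \<Rightarrow> nat"
  assumes finV: "finite V" and V0: "0 \<notin> V" and finK: "finite K" and injJ: "inj_on J K"
    and JV: "J ` K \<subseteq> V" and IV: "I ` K \<subseteq> V"
  shows "\<exists>f. bij_betw f
      {F. in_forest V (arcs_of V W) F \<and> (\<forall>u\<in>K. in_tree_with_root V F (I u) (J u))}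
      {F. in_forest (ground_vertices V) (ground_arcs V W) F \<and>
          num_trees (ground_vertices V) F = card K + 1 \<and>
          in_tree_with_root (ground_vertices V) F 0 0 \<and>
          (\<forall>u\<in>K. in_tree_with_root (ground_vertices V) F (I u) (J u))}
    \<and> (\<forall>F. in_forest V (arcs_of V W) F \<and> (\<forall>u\<in>K. in_tree_with_root V F (I u) (J u)) \<longrightarrow>
          sg_weight (ground_weight W) (f F) = sg_weight W F)"
proof -
  let ?V' = "insert 0 V"
  define Js where "Js = J ` K"
  define R where "R F = {r\<in>V. out_deg F r = 0 \<and> r \<notin> Js}" for F :: "(nat \<times> nat) set"
  define f where "f F = F \<union> R F \<times> {0}" for F
  have EV: "arcs_of V W \<subseteq> V \<times> V" by (auto simp: arcs_of_def)
  have E'V: "ground_arcs V W \<subseteq> ?V' \<times> ?V'" by (auto simp: ground_arcs_def arcs_of_def)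
  have gv: "ground_vertices V = ?V'" by (simp add: ground_vertices_def)
  have finV': "finite ?V'" using finV by simp
  have JsV: "Js \<subseteq> V" using JV Js_def by simp
  have finJs: "finite Js" using finK Js_def by simp
  have cardJs: "card (insert 0 Js) = card K + 1"
    using card_image[OF injJ] JsV V0 finJs Js_def by (subst card_insert_disjoint) auto
  have ga: "(a, b) \<in> ground_arcs V W \<longleftrightarrow> a \<in> V \<and> (b = 0 \<or> (b \<in> V \<and> (a, b) \<in> arcs_of V W))" for a b
    using V0 by (auto simp: ground_arcs_def arcs_of_def)
  define A where "A = {F. in_forest V (arcs_of V W) F \<and> (\<forall>u\<in>K. in_tree_with_root V F (I u) (J u))}"
  define B where "B = {F. in_forest (ground_vertices V) (ground_arcs V W) F \<and>
          num_trees (ground_vertices V) F = card K + 1 \<and>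
          in_tree_with_root (ground_vertices V) F 0 0 \<and>
          (\<forall>u\<in>K. in_tree_with_root (ground_vertices V) F (I u) (J u))}"
  have Achar: "F \<in> A \<longleftrightarrow> F \<subseteq> arcs_of V W \<and> good V F \<and> (\<forall>u\<in>K. (I u, J u) \<in> S F \<and> out_deg F (J u) = 0)" for F
    using forest_iff[OF finV EV] IV JV unfolding A_def in_tree_with_root_def wcomp_rel_def by auto
  have Bchar: "G \<in> B \<longleftrightarrow> G \<subseteq> ground_arcs V W \<and> good ?V' G \<and> card {r\<in>?V'. out_deg G r = 0} = card K + 1
      \<and> (\<forall>u\<in>K. (I u, J u) \<in> S G \<and> out_deg G (J u) = 0)" for G
  proof -
    have z: "out_deg G 0 = 0" if "G \<subseteq> ground_arcs V W"
    proof -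
      have "{w. (0, w) \<in> G} = {}" using that ga V0 by blast
      then show ?thesis unfolding out_deg_def by simp
    qed
    have "G \<in> B \<longleftrightarrow> G \<subseteq> ground_arcs V W \<and> good ?V' G \<and> num_trees ?V' G = card K + 1
      \<and> out_deg G 0 = 0 \<and> (\<forall>u\<in>K. (I u, J u) \<in> S G \<and> out_deg G (J u) = 0)"
      using forest_iff[OF finV' E'V] IV JV unfolding B_def in_tree_with_root_def wcomp_rel_def gv by auto
    then show ?thesis using z card_quot[of ?V' G] unfolding num_trees_def by auto
  qed
  have fwd: "f F \<in> B \<and> sg_weight (ground_weight W) (f F) = sg_weight W F" if FA: "F \<in> A" for F
  proof -
    from FA have FE: "F \<subseteq> arcs_of V W" and gF: "good V F"
      and cF: "\<forall>u\<in>K. (I u, J u) \<in> S F \<and> out_deg F (J u) = 0" using Achar by auto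
    from gF have FV: "F \<subseteq> V \<times> V" and finF: "finite F" and degF: "\<forall>v. out_deg F v \<le> 1"
      and snkF: "\<forall>x\<in>V. \<exists>r\<in>V. (x, r) \<in> S F \<and> out_deg F r = 0" unfolding good_def by auto
    let ?G = "f F"
    have finR: "finite (R F)" using finV unfolding R_def by simp
    have finG: "finite ?G" using finF finR unfolding f_def by simp
    have FG: "F \<subseteq> ?G" unfolding f_def by auto
    have succ: "{w. (v, w) \<in> ?G} = (if v \<in> R F then {0} else {w. (v, w) \<in> F})" for v
    proof (cases "v \<in> R F")
      case True
      then have "\<forall>w. (v, w) \<notin> F" using out_deg_0_iff[OF finF] unfolding R_def by auto
      then show ?thesis using True unfolding f_def by auto
    qed (auto simp: f_def)
    have odG: "out_deg ?G v = (if v \<in> R F then 1 else out_deg F v)" for v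
      unfolding out_deg_def using succ[of v] by simp
    have sinkG: "out_deg ?G v = 0 \<longleftrightarrow> v \<notin> R F \<and> out_deg F v = 0" for v
      using odG[of v] by auto
    have GE: "?G \<subseteq> ground_arcs V W" using FE unfolding f_def R_def ground_arcs_def by auto
    have GV: "?G \<subseteq> ?V' \<times> ?V'" using GE E'V by auto
    have degG: "\<forall>v. out_deg ?G v \<le> 1" using odG degF by simp
    have F0: "out_deg F 0 = 0" using FV V0 out_deg_0_iff[OF finF] by auto
    have R0: "0 \<notin> R F" using V0 unfolding R_def by auto
    have snkG: "\<forall>x\<in>?V'. \<exists>r\<in>?V'. (x, r) \<in> S ?G \<and> out_deg ?G r = 0"
    proof
      fix x assume x: "x \<in> ?V'"
      show "\<exists>r\<in>?V'. (x, r) \<in> S ?G \<and> out_deg ?G r = 0"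
      proof (cases "x = 0")
        case True then show ?thesis using sinkG F0 R0 by auto
      next
        case False
        then have "x \<in> V" using x by auto
        then obtain r where r: "r \<in> V" "(x, r) \<in> S F" "out_deg F r = 0" using snkF by blast
        have xr: "(x, r) \<in> S ?G" using S_mono[OF FG r(2)] .
        show ?thesis
        proof (cases "r \<in> R F")
          case True
          then have "(r, 0) \<in> ?G" unfolding f_def by auto
          then have "(x, 0) \<in> S ?G" using xr S_trans S_edge by metis
          then show ?thesis using sinkG F0 R0 by auto
        next
          case False then show ?thesis using r xr sinkG by auto
        qed
      qed
    qed
    have goodG: "good ?V' ?G" unfolding good_def using GV finG degG snkG by blast
    have Jsink: "out_deg F j = 0" if "j \<in> Js" for j using cF that Js_def by auto
    have sinks: "{r\<in>?V'. out_deg ?G r = 0} = insert 0 Js"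
    proof
      show "{r\<in>?V'. out_deg ?G r = 0} \<subseteq> insert 0 Js" using sinkG unfolding R_def by auto
      show "insert 0 Js \<subseteq> {r\<in>?V'. out_deg ?G r = 0}" using sinkG F0 R0 Jsink JsV unfolding R_def by auto
    qed
    have cG: "\<forall>u\<in>K. (I u, J u) \<in> S ?G \<and> out_deg ?G (J u) = 0"
      using cF S_mono[OF FG] sinkG unfolding R_def Js_def by auto
    have inB: "?G \<in> B" using Bchar GE goodG sinks cardJs cG by auto
    have disj: "F \<inter> R F \<times> {0} = {}" using FV V0 by auto
    have w1: "(\<Prod>(i, j)\<in>F. ground_weight W i j) = (\<Prod>(i, j)\<in>F. W i j)"
      by (rule prod.cong) (use FV V0 in \<open>auto simp: ground_weight_def\<close>)
    have w2: "(\<Prod>(i, j)\<in>R F \<times> {0}. ground_weight W i j) = 1"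
      by (rule prod.neutral) (auto simp: ground_weight_def)
    have "sg_weight (ground_weight W) ?G = sg_weight W F"
      unfolding sg_weight_def f_def using prod.union_disjoint[OF finF _ disj, of "\<lambda>(i, j). ground_weight W i j"] finR w1 w2
      by simp
    then show ?thesis using inB by blast
  qed
  have inj: "inj_on f A"
  proof (rule inj_onI)
    fix F1 F2 assume "F1 \<in> A" "F2 \<in> A" "f F1 = f F2"
    then have "F1 \<subseteq> V \<times> V" "F2 \<subseteq> V \<times> V" using Achar EV by auto
    moreover have "f F \<inter> (V \<times> V) = F" if "F \<subseteq> V \<times> V" for F using that V0 unfolding f_def by auto
    ultimately show "F1 = F2" using \<open>f F1 = f F2\<close> by metis
  qed
  have surj: "\<exists>F\<in>A. G = f F" if GB: "G \<in> B" for G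
  proof -
    from GB have GE: "G \<subseteq> ground_arcs V W" and gG: "good ?V' G"
      and cardG: "card {r\<in>?V'. out_deg G r = 0} = card K + 1"
      and cG: "\<forall>u\<in>K. (I u, J u) \<in> S G \<and> out_deg G (J u) = 0" using Bchar by auto
    from gG have GV: "G \<subseteq> ?V' \<times> ?V'" and finG: "finite G" and degG: "\<forall>v. out_deg G v \<le> 1"
      and snkG: "\<forall>x\<in>?V'. \<exists>r\<in>?V'. (x, r) \<in> S G \<and> out_deg G r = 0" unfolding good_def by auto
    define F where "F = G \<inter> (V \<times> V)"
    have FG: "F \<subseteq> G" unfolding F_def by auto
    have FV: "F \<subseteq> V \<times> V" unfolding F_def by auto
    have finF: "finite F" using finG FG finite_subset by auto
    have FE: "F \<subseteq> arcs_of V W"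
    proof
      fix p assume "p \<in> F"
      then obtain a b where ab: "p = (a, b)" "(a, b) \<in> G" "b \<in> V" unfolding F_def by auto
      have "b \<noteq> 0"
      proof
        assume "b = 0"
        then show False using ab(3) V0 by simp
      qed
      moreover have "(a, b) \<in> ground_arcs V W" using ab GE by auto
      ultimately show "p \<in> arcs_of V W" using ab ga[of a b] by blast
    qed
    have degF: "\<forall>v. out_deg F v \<le> 1"
    proof
      fix v
      have "out_deg F v \<le> out_deg G v" by (rule out_deg_mono[OF finG FG])
      moreover have "out_deg G v \<le> 1" using degG by blast
      ultimately show "out_deg F v \<le> 1" by linarith
    qed
    have sF: "out_deg F v = 0" if "out_deg G v = 0" for v
      using out_deg_mono[OF finG FG, of v] that by simp
    have G0: "out_deg G 0 = 0"
    proof -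
      have "(0, w) \<notin> G" for w using GE ga[of 0 w] V0 by blast
      then have "{w. (0, w) \<in> G} = {}" by blast
      then show ?thesis unfolding out_deg_def by simp
    qed
    have snkF: "\<exists>r\<in>V. (x, r) \<in> S F \<and> out_deg F r = 0" if xV: "x \<in> V" for x
    proof (rule ccontr)
      assume H: "\<not> (\<exists>r\<in>V. (x, r) \<in> S F \<and> out_deg F r = 0)"
      have cl: "(x, y) \<in> S F" if "(x, y) \<in> S G" for y
        using that
      proof (induction rule: rtrancl_induct)
        case base then show ?case by simp
      next
        case (step y z)
        have yV: "y \<in> V" using S_in_V[OF step.IH xV FV] .
        show ?case
        proof (cases "(y, z) \<in> G")
          case True
          have "out_deg F y \<noteq> 0" using H step.IH yV by auto
          then obtain w where w: "(y, w) \<in> F" using out_deg_0_iff[OF finF] by auto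
          have "(y, w) \<in> G" using w FG by auto
          then have "z = w" using out_deg_uniq[OF finG degG[rule_format] True] by blast
          then show ?thesis using S_trans[OF step.IH S_edge[OF w]] by simp
        next
          case False
          then have zy: "(z, y) \<in> G" using step by auto
          then have "(z, y) \<in> ground_arcs V W" using GE by auto
          then have "z \<in> V" using ga[of z y] by blast
          then have "(z, y) \<in> F" using zy yV unfolding F_def by auto
          then show ?thesis using S_trans[OF step.IH S_sym[OF S_edge]] by blast
        qed
      qed
      obtain r where r: "r \<in> ?V'" "(x, r) \<in> S G" "out_deg G r = 0" using snkG xV by blast
      have "(x, r) \<in> S F" using cl r(2) .
      moreover then have "r \<in> V" using S_in_V[OF _ xV FV] by blast
      ultimately show False using H sF r(3) by blast
    qed
    have goodF: "good V F" unfolding good_def using FV finF degF snkF by blast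
    have JsG: "out_deg G j = 0" "j \<in> V" if "j \<in> Js" for j using cG that Js_def JsV by auto
    have sinks: "{r\<in>?V'. out_deg G r = 0} = insert 0 Js"
    proof (rule sym, rule card_subset_eq)
      show "finite {r\<in>?V'. out_deg G r = 0}" using finV' by simp
      show "insert 0 Js \<subseteq> {r\<in>?V'. out_deg G r = 0}" using G0 JsG by auto
      show "card (insert 0 Js) = card {r\<in>?V'. out_deg G r = 0}" using cardG cardJs by simp
    qed
    have arc0: "(r, w) \<in> G \<Longrightarrow> r \<in> V \<and> (w = 0 \<or> (w \<in> V \<and> (r, w) \<in> F))" for r w
    proof -
      assume rw: "(r, w) \<in> G"
      then have "(r, w) \<in> ground_arcs V W" using GE by auto
      then have "r \<in> V \<and> (w = 0 \<or> w \<in> V)" using ga[of r w] by blast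
      then show ?thesis using rw unfolding F_def by auto
    qed
    have cF: "\<forall>u\<in>K. (I u, J u) \<in> S F \<and> out_deg F (J u) = 0"
    proof
      fix u assume u: "u \<in> K"
      have Ju: "out_deg G (J u) = 0" "J u \<in> V" "(I u, J u) \<in> S G" using cG u JV by auto
      obtain r where r: "r \<in> V" "(I u, r) \<in> S F" "out_deg F r = 0" using snkF IV u by blast
      have rJ: "(r, J u) \<in> S G" using S_trans[OF S_sym[OF S_mono[OF FG r(2)]] Ju(3)] .
      have "r = J u"
      proof (cases "out_deg G r = 0")
        case True then show ?thesis using sink_uniq[OF finG degG rJ] Ju by blast
      next
        case False
        then obtain w where w: "(r, w) \<in> G" using out_deg_0_iff[OF finG] by auto
        have "(r, w) \<notin> F" using r(3) out_deg_0_iff[OF finF] by blast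
        then have "w = 0" using arc0[OF w] by blast
        then have "(J u, 0) \<in> S G" using S_trans[OF S_sym[OF rJ] S_edge[OF w]] by simp
        then have "J u = 0" using sink_uniq[OF finG degG _ Ju(1) G0] by blast
        then show ?thesis using Ju V0 by simp
      qed
      then show "(I u, J u) \<in> S F \<and> out_deg F (J u) = 0" using r by simp
    qed
    have FA: "F \<in> A" using Achar FE goodF cF by blast
    have "G = f F"
    proof
      show "G \<subseteq> f F"
      proof
        fix p assume p: "p \<in> G"
        obtain a b where ab: "p = (a, b)" by (cases p) auto
        show "p \<in> f F"
        proof (cases "b \<in> V")
          case True then show ?thesis using arc0 p ab unfolding f_def F_def by auto
        next
          case False
          then have b0: "b = 0" and aV: "a \<in> V" using arc0 p ab by auto
          have "out_deg F a = 0"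
          proof -
            have "(a, w) \<notin> F" for w
            proof
              assume "(a, w) \<in> F"
              then have "(a, w) \<in> G" using FG by auto
              moreover have "(a, 0) \<in> G" using p ab b0 by simp
              ultimately have "w = 0" using out_deg_uniq[OF finG degG[rule_format]] by blast
              then show False using \<open>(a, w) \<in> F\<close> FV V0 by auto
            qed
            then show ?thesis using out_deg_0_iff[OF finF] by auto
          qed
          moreover have "a \<notin> Js"
          proof
            assume "a \<in> Js"
            then have "out_deg G a = 0" by (rule JsG(1))
            then show False using p ab out_deg_0_iff[OF finG] by blast
          qed
          ultimately show ?thesis using aV ab b0 unfolding f_def R_def by auto
        qed
      qed
      show "f F \<subseteq> G"
      proof -
        have "(r, 0) \<in> G" if r: "r \<in> R F" for r
        proof (rule ccontr)
          assume n: "(r, 0) \<notin> G"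
          have "(r, w) \<notin> G" for w
          proof
            assume "(r, w) \<in> G"
            then have "(r, w) \<in> F" using arc0 n by blast
            then show False using r out_deg_0_iff[OF finF] unfolding R_def by blast
          qed
          then have "out_deg G r = 0" using out_deg_0_iff[OF finG] by auto
          then have "r \<in> insert 0 Js" using sinks r unfolding R_def by blast
          then show False using r V0 unfolding R_def by auto
        qed
        then show ?thesis using FG unfolding f_def by auto
      qed
    qed
    then show ?thesis using FA by blast
  qed
  have "bij_betw f A B"
    unfolding bij_betw_def using inj fwd surj by blast
  moreover have "\<forall>F. F \<in> A \<longrightarrow> sg_weight (ground_weight W) (f F) = sg_weight W F" using fwd by blast
  ultimately show ?thesis unfolding A_def B_def by blast
qed

theorem lemma1:
  fixes n k :: nat and W :: "nat \<Rightarrow> nat \<Rightarrow> real" and I J :: "nat \<Rightarrow> nat"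
  assumes "n > 1"
    and "\<forall>i\<in>{1..n}. \<forall>j\<in>{1..n}. W i j \<ge> 0"
    and "\<forall>i\<in>{1..n}. W i i = 0"
    and "k \<le> n"
    and "inj_on I {1..k}" and "I ` {1..k} \<subseteq> {1..n}"
    and "inj_on J {1..k}" and "J ` {1..k} \<subseteq> {1..n}"
  shows "\<exists>f. bij_betw f
      {F. in_forest {1..n} (arcs_of {1..n} W) F \<and>
          (\<forall>u\<in>{1..k}. in_tree_with_root {1..n} F (I u) (J u))}
      {F. in_forest (ground_vertices {1..n}) (ground_arcs {1..n} W) F \<and>
          num_trees (ground_vertices {1..n}) F = k + 1 \<and>
          in_tree_with_root (ground_vertices {1..n}) F 0 0 \<and>
          (\<forall>u\<in>{1..k}. in_tree_with_root (ground_vertices {1..n}) F (I u) (J u))}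
    \<and> (\<forall>F. in_forest {1..n} (arcs_of {1..n} W) F \<and>
          (\<forall>u\<in>{1..k}. in_tree_with_root {1..n} F (I u) (J u)) \<longrightarrow>
          sg_weight (ground_weight W) (f F) = sg_weight W F)"
  using main_gen[of "{1..n}" "{1..k}" J I W] assms by simp

end
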